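(* Let $c>0$ and $\lambda_1\le\lambda_2\le\dots\le\lambda_n$ be in $[0,1]$. The problem $\min_{w\in\Delta_n}\big(\|w\|_2^2+c(w^\top\lambda)^2\big)$ has a unique minimizer $w^*$, and it is given as follows. For $k\in[n]$ write $S_1(k)=\sum_{i\le k}\lambda_i$, $S_2(k)=\sum_{i\le k}\lambda_i^2$, and $\rho(k)=\frac{1+cS_2(k)}{cS_1(k)}$ (with $\rho(k)=+\infty$ if $S_1(k)=0$). Let $m$ be the largest $k\in[n]$ such that $\lambda_{j+1}<\rho(j)$ for all $1\le j<k$ (i.e., start from $k=1$ and increase $k$ while $k<n$ and $\lambda_{k+1}<\rho(k)$). Set \[ \beta=\frac{1+cS_2(m)}{m(1+cS_2(m))-cS_1(m)^2},\qquad \alpha=\frac{cS_1(m)\,\beta}{1+cS_2(m)}. \] Then $w^*_i=\beta-\alpha\lambda_i$ for $i\le m$ and $w^*_i=0$ for $i>m$. Moreover $w^*_i=(\beta'-c(w^{*\top}\lambda)\lambda_i)_+$ for all $i$ and a suitable scalar $\beta'$.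
   Context: $\Delta_n=\{w\in\mathbb R^n:w_i\ge0,\ \sum_iw_i=1\}$; $(x)_+=\max\{x,0\}$. *)

theory Defs
  imports Complex_Main "HOL-Library.Extended_Real"
begin

text \<open>Vectors in R^n are represented as functions nat => real indexed by {1..n}.
  The simplex Delta_n: nonnegative entries on {1..n} summing to 1, and zero outside {1..n}
  (so that uniqueness of the minimizer is meaningful).\<close>
definition simplex :: "nat \<Rightarrow> (nat \<Rightarrow> real) set" where
  "simplex n = {w. (\<forall>i\<in>{1..n}. 0 \<le> w i) \<and> (\<Sum>i=1..n. w i) = 1 \<and> (\<forall>i. i \<notin> {1..n} \<longrightarrow> w i = 0)}"

definition obj :: "nat \<Rightarrow> real \<Rightarrow> (nat \<Rightarrow> real) \<Rightarrow> (nat \<Rightarrow> real) \<Rightarrow> real" where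
  "obj n c lam w = (\<Sum>i=1..n. (w i)^2) + c * (\<Sum>i=1..n. w i * lam i)^2"

definition S1 :: "(nat \<Rightarrow> real) \<Rightarrow> nat \<Rightarrow> real" where
  "S1 lam k = (\<Sum>i=1..k. lam i)"

definition S2 :: "(nat \<Rightarrow> real) \<Rightarrow> nat \<Rightarrow> real" where
  "S2 lam k = (\<Sum>i=1..k. (lam i)^2)"

definition rho :: "real \<Rightarrow> (nat \<Rightarrow> real) \<Rightarrow> nat \<Rightarrow> ereal" where
  "rho c lam k = (if S1 lam k = 0 then \<infinity> else ereal ((1 + c * S2 lam k) / (c * S1 lam k)))"

definition mstar :: "nat \<Rightarrow> real \<Rightarrow> (nat \<Rightarrow> real) \<Rightarrow> nat" where
  "mstar n c lam = (GREATEST k. k \<in> {1..n} \<and> (\<forall>j. 1 \<le> j \<and> j < k \<longrightarrow> ereal (lam (j+1)) < rho c lam j))"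

definition betaw :: "real \<Rightarrow> (nat \<Rightarrow> real) \<Rightarrow> nat \<Rightarrow> real" where
  "betaw c lam m = (1 + c * S2 lam m) / (real m * (1 + c * S2 lam m) - c * (S1 lam m)^2)"

definition alphaw :: "real \<Rightarrow> (nat \<Rightarrow> real) \<Rightarrow> nat \<Rightarrow> real" where
  "alphaw c lam m = c * S1 lam m * betaw c lam m / (1 + c * S2 lam m)"

end

theory Submission
  imports Defs
begin

lemma mstar_props:
  fixes n :: nat and c :: real and lam :: "nat \<Rightarrow> real"
  assumes "1 \<le> n"
  defines "m \<equiv> mstar n c lam"
  shows "1 \<le> m" "m \<le> n"
    "\<And>j. 1 \<le> j \<Longrightarrow> j < m \<Longrightarrow> ereal (lam (j+1)) < rho c lam j"
    "m < n \<Longrightarrow> \<not> ereal (lam (m+1)) < rho c lam m"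
proof -
  let ?P = "\<lambda>k. k \<in> {1..n} \<and> (\<forall>j. 1 \<le> j \<and> j < k \<longrightarrow> ereal (lam (j+1)) < rho c lam j)"
  have P1: "?P 1" using assms by auto
  have bnd: "\<And>y. ?P y \<Longrightarrow> y \<le> n" by auto
  have Pm: "?P m" unfolding m_def mstar_def by (rule GreatestI_nat[where P="?P", OF P1 bnd])
  then show "1 \<le> m" "m \<le> n" "\<And>j. 1 \<le> j \<Longrightarrow> j < m \<Longrightarrow> ereal (lam (j+1)) < rho c lam j"
    by auto
  show "\<not> ereal (lam (m+1)) < rho c lam m" if "m < n"
  proof
    assume h: "ereal (lam (m+1)) < rho c lam m"
    have "?P (m+1)"
    proof -
      have "\<forall>j. 1 \<le> j \<and> j < m+1 \<longrightarrow> ereal (lam (j+1)) < rho c lam j"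
      proof (intro allI impI)
        fix j assume "1 \<le> j \<and> j < m+1"
        then show "ereal (lam (j+1)) < rho c lam j"
          using Pm h by (cases "j = m") auto
      qed
      then show ?thesis using that \<open>1 \<le> m\<close> by auto
    qed
    then have "m+1 \<le> m" unfolding m_def mstar_def by (rule Greatest_le_nat[where P="?P", OF _ bnd])
    then show False by simp
  qed
qed

lemma idt: fixes A B C sv s c :: real
  shows "A + c * sv^2 = (B + c * s^2) + (A - 2*C + B) + c*(sv-s)^2 + 2*(C - B + (c*s)*(sv - s))"
  by (simp add: power2_eq_square algebra_simps)

lemma sq_exp: "(\<Sum>i=1..n. ((v i::real) - ws i)^2) = (\<Sum>i=1..n. (v i)^2) - 2 * (\<Sum>i=1..n. ws i * v i) + (\<Sum>i=1..n. (ws i)^2)"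
proof -
  have "(\<Sum>i=1..n. ((v i::real) - ws i)^2) = (\<Sum>i=1..n. (v i)^2 - 2 * (ws i * v i) + (ws i)^2)"
    by (rule sum.cong) (auto simp: power2_diff algebra_simps)
  then show ?thesis by (simp add: sum.distrib sum_subtractf sum_distrib_left)
qed

lemma E_exp: "(\<Sum>i=1..n. ((ws i::real) + a * lam i) * (v i - ws i)) = (\<Sum>i=1..n. ws i * v i) - (\<Sum>i=1..n. (ws i)^2) + a * ((\<Sum>i=1..n. v i * lam i) - (\<Sum>i=1..n. ws i * lam i))"
proof -
  have "(\<Sum>i=1..n. ((ws i::real) + a * lam i) * (v i - ws i)) = (\<Sum>i=1..n. ws i * v i - (ws i)^2 + a*(v i * lam i) - a*(ws i * lam i))"
    by (rule sum.cong) (auto simp: algebra_simps power2_eq_square)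
  then show ?thesis by (simp add: sum.distrib sum_subtractf sum_distrib_left right_diff_distrib)
qed

theorem mainTheorem3:
  fixes n :: nat and c :: real and lam :: "nat \<Rightarrow> real"
  assumes "1 \<le> n" and "c > 0"
    and "\<forall>i\<in>{1..n}. 0 \<le> lam i \<and> lam i \<le> 1"
    and "\<forall>i j. 1 \<le> i \<and> i \<le> j \<and> j \<le> n \<longrightarrow> lam i \<le> lam j"
  shows "let m = mstar n c lam; b = betaw c lam m; a = alphaw c lam m;
             ws = (\<lambda>i. if 1 \<le> i \<and> i \<le> m then b - a * lam i else 0)
         in ws \<in> simplex n
            \<and> (\<forall>v\<in>simplex n. obj n c lam ws \<le> obj n c lam v)
            \<and> (\<forall>v\<in>simplex n. (\<forall>u\<in>simplex n. obj n c lam v \<le> obj n c lam u) \<longrightarrow> v = ws)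
            \<and> (\<exists>b'. \<forall>i\<in>{1..n}. ws i = max 0 (b' - c * (\<Sum>j=1..n. ws j * lam j) * lam i))"
proof -
  define m where "m = mstar n c lam"
  note mp = mstar_props[OF assms(1), where c=c and lam=lam, folded m_def]
  have lam0: "\<And>i. 1 \<le> i \<Longrightarrow> i \<le> n \<Longrightarrow> 0 \<le> lam i" using assms(3) by auto
  have mono: "\<And>i j. 1 \<le> i \<Longrightarrow> i \<le> j \<Longrightarrow> j \<le> n \<Longrightarrow> lam i \<le> lam j" using assms(4) by auto
  have S1nn: "\<And>k. k \<le> n \<Longrightarrow> 0 \<le> S1 lam k" unfolding S1_def by (auto intro!: sum_nonneg lam0)
  have S2nn: "\<And>k. 0 \<le> S2 lam k" unfolding S2_def by (auto intro!: sum_nonneg)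
  define D where "D = 1 + c * S2 lam m"
  define T where "T = S1 lam m"
  have Dpos: "D > 0" unfolding D_def using S2nn[of m] assms(2) by (simp add: add_pos_nonneg)
  have Tnn: "0 \<le> T" unfolding T_def using S1nn mp(2) by auto
  define h where "h i = D - c * T * lam i" for i
  have gm: "h m > 0"
  proof (cases "m = 1")
    case True
    then show ?thesis unfolding h_def D_def T_def S1_def S2_def by (simp add: power2_eq_square)
  next
    case False
    then obtain k where k: "m = Suc k" "1 \<le> k" using mp(1) by (cases m) auto
    have cond: "ereal (lam (k+1)) < rho c lam k" using mp(3)[of k] k by simp
    have e1: "S1 lam m = S1 lam k + lam m" "S2 lam m = S2 lam k + (lam m)^2"
      unfolding S1_def S2_def using k by auto
    have hm: "h m = 1 + c * S2 lam k - c * S1 lam k * lam m"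
      unfolding h_def D_def T_def e1 by (simp add: algebra_simps power2_eq_square)
    show ?thesis
    proof (cases "S1 lam k = 0")
      case True
      then show ?thesis unfolding hm using S2nn[of k] assms(2)
        by (simp add: add_pos_nonneg)
    next
      case False
      have "0 \<le> S1 lam k" using S1nn[of k] k mp(2) by simp
      then have sp: "0 < c * S1 lam k" using False assms(2) by simp
      from cond False have "lam m < (1 + c * S2 lam k) / (c * S1 lam k)"
        unfolding rho_def using k by simp
      then have "lam m * (c * S1 lam k) < 1 + c * S2 lam k"
        using sp by (simp add: pos_less_divide_eq)
      then show ?thesis unfolding hm by (simp add: algebra_simps)
    qed
  qed
  have hpos: "\<And>i. 1 \<le> i \<Longrightarrow> i \<le> m \<Longrightarrow> h i > 0"
  proof -
    fix i assume i: "1 \<le> i" "i \<le> m"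
    have "lam i \<le> lam m" using mono[of i m] i mp(2) by simp
    then have "c * T * lam i \<le> c * T * lam m" using assms(2) Tnn
      by (simp add: mult_left_mono)
    then show "h i > 0" using gm unfolding h_def by simp
  qed
  have hneg: "\<And>i. m < i \<Longrightarrow> i \<le> n \<Longrightarrow> h i \<le> 0"
  proof -
    fix i assume i: "m < i" "i \<le> n"
    then have mn: "m < n" by simp
    have nc: "\<not> ereal (lam (m+1)) < rho c lam m" using mp(4)[OF mn] .
    then have T0: "T \<noteq> 0" unfolding rho_def T_def by auto
    then have sp: "0 < c * T" using Tnn assms(2) by simp
    from nc T0 have "\<not> lam (m+1) < D / (c * T)" unfolding rho_def T_def D_def by simp
    then have "D \<le> lam (m+1) * (c * T)" using sp by (simp add: pos_less_divide_eq)
    moreover have "lam (m+1) \<le> lam i" using mono[of "m+1" i] i by simp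
    ultimately have "D \<le> lam i * (c * T)" using sp
      by (meson mult_right_mono order_trans less_imp_le)
    then show "h i \<le> 0" unfolding h_def by (simp add: algebra_simps)
  qed
  define Q where "Q = real m * D - c * T^2"
  have sumh: "(\<Sum>i=1..m. h i) = Q"
    proof -
    have "(\<Sum>i=1..m. h i) = (\<Sum>i=1..m. D) - c * T * (\<Sum>i=1..m. lam i)"
      unfolding h_def by (simp add: sum_subtractf sum_distrib_left)
    then show ?thesis unfolding Q_def T_def S1_def by (simp add: power2_eq_square)
  qed
  have Qpos: "Q > 0"
  proof -
    have "(\<Sum>i=1..m. h i) > 0" using mp(1) hpos by (intro sum_pos) auto
    then show ?thesis using sumh by simp
  qed
  have sumhl: "(\<Sum>i=1..m. h i * lam i) = T"
  proof -
    have "(\<Sum>i=1..m. h i * lam i) = D * (\<Sum>i=1..m. lam i) - c * T * (\<Sum>i=1..m. (lam i)^2)"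
      unfolding h_def by (simp add: algebra_simps sum_subtractf sum_distrib_left power2_eq_square)
    then show ?thesis by (simp add: D_def T_def S1_def S2_def algebra_simps)
  qed
  define b where "b = betaw c lam m"
  define a where "a = alphaw c lam m"
  have b_eq: "b = D / Q" unfolding b_def betaw_def D_def Q_def T_def by simp
  have a_eq: "a = c * T / Q" unfolding a_def alphaw_def b_eq[unfolded b_def] D_def[symmetric] T_def[symmetric]
    using Dpos by simp
  define ws where "ws = (\<lambda>i. if 1 \<le> i \<and> i \<le> m then b - a * lam i else 0)"
  have wsh: "\<And>i. 1 \<le> i \<Longrightarrow> i \<le> m \<Longrightarrow> ws i = h i / Q"
    unfolding ws_def a_eq b_eq h_def by (simp add: diff_divide_distrib)
  have ba: "\<And>i. b - a * lam i = h i / Q"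
    unfolding a_eq b_eq h_def by (simp add: diff_divide_distrib)
  have sumw: "(\<Sum>i=1..n. ws i) = 1"
  proof -
    have "(\<Sum>i=1..n. ws i) = (\<Sum>i=1..m. h i / Q)"
      by (rule sum.mono_neutral_cong_right) (use mp(2) wsh in \<open>auto simp: ws_def\<close>)
    also have "\<dots> = 1" using sumh Qpos by (simp add: sum_divide_distrib[symmetric])
    finally show ?thesis .
  qed
  define s where "s = (\<Sum>j=1..n. ws j * lam j)"
  have s_eq: "s = T / Q"
  proof -
    have "s = (\<Sum>i=1..m. h i * lam i / Q)" unfolding s_def
      by (rule sum.mono_neutral_cong_right) (use mp(2) wsh in \<open>auto simp: ws_def\<close>)
    also have "\<dots> = T / Q" using sumhl by (simp add: sum_divide_distrib[symmetric])
    finally show ?thesis .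
  qed
  have cs: "c * s = a" unfolding s_eq a_eq by simp
  have kkt: "\<And>i. i \<in> {1..n} \<Longrightarrow> ws i = max 0 (b - a * lam i)"
  proof -
    fix i assume i: "i \<in> {1..n}"
    show "ws i = max 0 (b - a * lam i)"
    proof (cases "i \<le> m")
      case True
      then show ?thesis using i hpos[of i] Qpos wsh[of i] ba[of i] by simp
    next
      case False
      then have "h i \<le> 0" using hneg[of i] i by simp
      then have "b - a * lam i \<le> 0" using ba[of i] Qpos by (simp add: divide_nonpos_pos)
      then show ?thesis using False by (simp add: ws_def)
    qed
  qed
  have ws_simp: "ws \<in> simplex n"
    unfolding simplex_def using kkt sumw mp(2) by (auto simp: ws_def)
  have key: "obj n c lam v \<ge> obj n c lam ws + (\<Sum>i=1..n. (v i - ws i)^2)" if v: "v \<in> simplex n" for v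
  proof -
    have vnn: "\<And>i. i \<in> {1..n} \<Longrightarrow> 0 \<le> v i" and vs: "(\<Sum>i=1..n. v i) = 1"
      using v unfolding simplex_def by auto
    define sv where "sv = (\<Sum>i=1..n. v i * lam i)"
    define E where "E = (\<Sum>i=1..n. (ws i + a * lam i) * (v i - ws i))"
    have Eeq: "E = (\<Sum>i=1..n. ws i * v i) - (\<Sum>i=1..n. (ws i)^2) + a * (sv - s)"
      unfolding E_def sv_def s_def by (rule E_exp)
    have sq: "(\<Sum>i=1..n. (v i - ws i)^2) = (\<Sum>i=1..n. (v i)^2) - 2 * (\<Sum>i=1..n. ws i * v i) + (\<Sum>i=1..n. (ws i)^2)"
      by (rule sq_exp)
    have ov: "obj n c lam v = (\<Sum>i=1..n. (v i)^2) + c * sv^2" unfolding obj_def sv_def by simp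
    have ow: "obj n c lam ws = (\<Sum>i=1..n. (ws i)^2) + c * s^2" unfolding obj_def s_def by simp
    have ident: "obj n c lam v = obj n c lam ws + (\<Sum>i=1..n. (v i - ws i)^2) + c * (sv - s)^2 + 2 * E"
      unfolding ov ow sq Eeq cs[symmetric] by (rule idt)
    have Ege: "E \<ge> (\<Sum>i=1..n. b * (v i - ws i))" unfolding E_def
    proof (rule sum_mono)
      fix i assume i: "i \<in> {1..n}"
      show "b * (v i - ws i) \<le> (ws i + a * lam i) * (v i - ws i)"
      proof (cases "i \<le> m")
        case True
        then show ?thesis using i by (simp add: ws_def)
      next
        case False
        then have w0: "ws i = 0" by (simp add: ws_def)
        have "b - a * lam i \<le> 0" using kkt[OF i] w0 by (simp add: max_def split: if_splits)
        then show ?thesis using w0 vnn[OF i] by (simp add: mult_right_mono)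
      qed
    qed
    have "(\<Sum>i=1..n. b * (v i - ws i)) = 0"
      using vs sumw by (simp add: sum_distrib_left[symmetric] sum_subtractf)
    then have "E \<ge> 0" using Ege by simp
    then show ?thesis using ident assms(2) by (simp add: add_nonneg_nonneg)
  qed
  have opt: "\<forall>v\<in>simplex n. obj n c lam ws \<le> obj n c lam v"
  proof
    fix v assume v: "v \<in> simplex n"
    have "0 \<le> (\<Sum>i=1..n. (v i - ws i)^2)" by (simp add: sum_nonneg)
    then show "obj n c lam ws \<le> obj n c lam v" using key[OF v] by simp
  qed
  have uniq: "\<forall>v\<in>simplex n. (\<forall>u\<in>simplex n. obj n c lam v \<le> obj n c lam u) \<longrightarrow> v = ws"
  proof (intro ballI impI)
    fix v assume v: "v \<in> simplex n" and h: "\<forall>u\<in>simplex n. obj n c lam v \<le> obj n c lam u"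
    have "obj n c lam v \<le> obj n c lam ws" using h ws_simp by simp
    then have "(\<Sum>i=1..n. (v i - ws i)^2) \<le> 0" using key[OF v] by simp
    then have "(\<Sum>i=1..n. (v i - ws i)^2) = 0" by (simp add: antisym sum_nonneg)
    then have z: "\<forall>i\<in>{1..n}. (v i - ws i)^2 = 0" by (subst (asm) sum_nonneg_eq_0_iff) auto
    show "v = ws"
    proof
      fix i show "v i = ws i"
      proof (cases "i \<in> {1..n}")
        case True then show ?thesis using z by simp
      next
        case False then show ?thesis using v ws_simp unfolding simplex_def by auto
      qed
    qed
  qed
  have ex: "\<exists>b'. \<forall>i\<in>{1..n}. ws i = max 0 (b' - c * (\<Sum>j=1..n. ws j * lam j) * lam i)"
    using kkt cs unfolding s_def by auto
  have main: "ws \<in> simplex n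
            \<and> (\<forall>v\<in>simplex n. obj n c lam ws \<le> obj n c lam v)
            \<and> (\<forall>v\<in>simplex n. (\<forall>u\<in>simplex n. obj n c lam v \<le> obj n c lam u) \<longrightarrow> v = ws)
            \<and> (\<exists>b'. \<forall>i\<in>{1..n}. ws i = max 0 (b' - c * (\<Sum>j=1..n. ws j * lam j) * lam i))"
    using ws_simp opt uniq ex by blast
  show ?thesis unfolding Let_def m_def[symmetric] b_def[symmetric] a_def[symmetric]
    using main unfolding ws_def .
qed

end
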